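(* Let $m\in\mathbb{N}$ and let $\mathcal{P}_m$ be the set of all functions of the form $$p(z)=ib+\sum_{j=1}^m a_j\frac{s_j+z}{s_j-z},\quad z\in\mathbb{D},$$ where $b\in\mathbb{R}$, $a_1,\dots,a_m>0$, and $s_1,\dots,s_m$ are pairwise distinct points of $\partial\mathbb{D}$. Then $p\mapsto1/p$ is an involution of $\mathcal{P}_m$ onto itself.
   Context: $\mathbb{D}$ denotes the open unit disk. *)

theory Defs
  imports "HOL-Analysis.Analysis"
begin

text \<open>Functions are total in HOL; membership only constrains the values on the
  open unit disk (ball 0 1).\<close>

definition Pm :: "nat \<Rightarrow> (complex \<Rightarrow> complex) set" where
  "Pm m = {p. \<exists>(b::real) (a::nat \<Rightarrow> real) (s::nat \<Rightarrow> complex).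
              (\<forall>j\<in>{1..m}. a j > 0) \<and>
              (\<forall>j\<in>{1..m}. cmod (s j) = 1) \<and>
              inj_on s {1..m} \<and>
              (\<forall>z\<in>ball 0 1. p z = \<i> * complex_of_real b +
                   (\<Sum>j=1..m. complex_of_real (a j) * ((s j + z) / (s j - z))))}"

end

theory Submission
  imports Defs "HOL-Computational_Algebra.Polynomial" "HOL-Complex_Analysis.Complex_Analysis" begin

lemma infinite_circle: "infinite (sphere (0::complex) 1)"
proof
  assume f: "finite (sphere (0::complex) 1)"
  have c: "connected (sphere (0::complex) 1)" by (rule connected_sphere) auto
  from connected_finite_iff_sing[OF c] f obtain a where "sphere (0::complex) 1 = {a}" by auto
  moreover have "1 \<in> sphere (0::complex) 1" "-1 \<in> sphere (0::complex) 1" by auto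
  ultimately show False by auto
qed

lemma re_frac:
  fixes s z :: complex assumes "cmod s = 1"
  shows "Re ((s + z) / (s - z)) = (1 - (cmod z)^2) / (cmod (s - z))^2"
proof -
  have h: "(Re s)^2 + (Im s)^2 = 1" using assms by (simp add: cmod_def)
  have n: "(cmod z)^2 = (Re z)^2 + (Im z)^2" by (simp add: cmod_def)
  have "Re (s + z) * Re (s - z) + Im (s + z) * Im (s - z) = ((Re s)^2 + (Im s)^2) - ((Re z)^2 + (Im z)^2)"
    by (simp add: power2_eq_square algebra_simps)
  also have "\<dots> = 1 - (cmod z)^2" using h n by simp
  finally have "Re (s + z) * Re (s - z) + Im (s + z) * Im (s - z) = 1 - (cmod z)^2" .
  moreover have "(cmod (s - z))^2 = (Re (s - z))^2 + (Im (s - z))^2" by (simp add: cmod_power2)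
  ultimately show ?thesis by (simp add: Re_divide)
qed

lemma neg_real_frac:
  fixes s t :: complex assumes "cmod s = 1" "cmod t = 1" "s \<noteq> t"
  shows "s * t / (s - t)^2 = of_real (1 / (2 * Re (s * cnj t) - 2)) \<and> 2 * Re (s * cnj t) - 2 < 0"
proof -
  have tt: "t * cnj t = 1" using assms(2) by (metis complex_norm_square mult.commute norm_one of_real_1 power_one)
  have ss: "s * cnj s = 1" using assms(1) by (metis complex_norm_square mult.commute norm_one of_real_1 power_one)
  have e0: "s * t * (s * cnj t + t * cnj s - 2) = s * s * (t * cnj t) + t * t * (s * cnj s) - 2 * s * t"
    by algebra
  have e: "(s - t)^2 = s * t * (s * cnj t + t * cnj s - 2)"
    unfolding e0 tt ss by (simp add: power2_eq_square algebra_simps)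
  have r: "s * cnj t + t * cnj s = of_real (2 * Re (s * cnj t))"
    by (simp add: complex_eq_iff algebra_simps)
  have "(cmod (s - t))^2 = 2 - 2 * Re (s * cnj t)"
  proof -
    have "complex_of_real ((cmod (s - t))^2) = (s - t) * cnj (s - t)" by (rule complex_norm_square)
    also have "\<dots> = 2 - (s * cnj t + t * cnj s)" by (simp add: algebra_simps tt ss)
    also have "\<dots> = complex_of_real (2 - 2 * Re (s * cnj t))" using r by simp
    finally show ?thesis by (simp only: of_real_eq_iff)
  qed
  moreover have "(cmod (s - t))^2 > 0" using assms by auto
  ultimately have neg: "2 * Re (s * cnj t) - 2 < 0" by linarith
  have st: "s * t \<noteq> 0" using assms by auto
  have "s * t / (s - t)^2 = 1 / (s * cnj t + t * cnj s - 2)" unfolding e using st by simp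
  also have "\<dots> = of_real (1 / (2 * Re (s * cnj t) - 2))" using r by simp
  finally show ?thesis using neg by simp
qed

lemma complex_poly_has_root:
  fixes p :: "complex poly" assumes "degree p > 0"
  obtains z where "poly p z = 0"
proof -
  have "coeff p 0 = 0 \<or> (\<exists>i\<in>{1..degree p}. coeff p i \<noteq> 0)"
    using assms by (intro disjI2 bexI[of _ "degree p"]) auto
  then obtain z where "(\<Sum>i\<le>degree p. coeff p i * z^i) = 0"
    by (rule fundamental_theorem_of_algebra)
  then show ?thesis using that by (simp add: poly_altdef)
qed

lemma card_roots_simple:
  fixes p :: "complex poly"
  assumes "p \<noteq> 0" "\<And>z. poly p z = 0 \<Longrightarrow> poly (pderiv p) z \<noteq> 0"
  shows "card {z. poly p z = 0} = degree p"
  using assms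
proof (induction "degree p" arbitrary: p)
  case 0
  have "poly p z \<noteq> 0" for z
  proof -
    have "poly p z = coeff p 0" using 0(1)[symmetric] by (simp add: poly_altdef)
    moreover have "coeff p (degree p) \<noteq> 0" using 0(2) by simp
    ultimately show ?thesis using 0(1)[symmetric] by simp
  qed
  then show ?case using 0(1) by simp
next
  case (Suc n)
  obtain a where a: "poly p a = 0" using complex_poly_has_root[of p] Suc(2) by auto
  then obtain q where q: "p = [:-a, 1:] * q" by (auto simp: poly_eq_0_iff_dvd dvd_def)
  have q0: "q \<noteq> 0" using Suc(3) q by auto
  have "degree p = degree [:-a, 1:] + degree q" unfolding q using q0 by (intro degree_mult_eq) auto
  then have dq: "degree q = n" using Suc(2) by simp
  have pd: "poly (pderiv p) z = poly q z + (z - a) * poly (pderiv q) z" for z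
    unfolding q pderiv_mult by (simp add: pderiv_pCons algebra_simps)
  have qa: "poly q a \<noteq> 0" using Suc(4)[OF a] pd[of a] by simp
  have "card {z. poly q z = 0} = degree q"
  proof (rule Suc(1)[OF dq[symmetric] q0])
    fix z assume z: "poly q z = 0"
    then have "z \<noteq> a" using qa by auto
    moreover have "poly p z = 0" using z q by simp
    ultimately show "poly (pderiv q) z \<noteq> 0" using Suc(4) pd[of z] z by auto
  qed
  moreover have "{z. poly p z = 0} = insert a {z. poly q z = 0}" using q by auto
  moreover have "finite {z. poly q z = 0}" using q0 by (rule poly_roots_finite)
  ultimately show ?case using qa Suc(2) dq by simp
qed

lemma inv_in_Pm:
  assumes m1: "m \<ge> 1" and pP: "p \<in> Pm m"
  shows "(\<lambda>z. 1 / p z) \<in> Pm m"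
proof -
  from pP obtain b a s where apos: "\<forall>j\<in>{1..m}. a j > (0::real)"
    and sunit: "\<forall>j\<in>{1..m}. cmod (s j) = 1" and sinj: "inj_on s {1..m}"
    and prep: "\<forall>z\<in>ball 0 1. p z = \<i> * complex_of_real b +
                   (\<Sum>j=1..m. complex_of_real (a j) * ((s j + z) / (s j - z)))"
    unfolding Pm_def by blast
  define I where "I = {1..m}"
  define S where "S = s ` I"
  define pf where "pf z = \<i> * complex_of_real b + (\<Sum>j\<in>I. complex_of_real (a j) * ((s j + z) / (s j - z)))" for z
  define pf' where "pf' z = (\<Sum>j\<in>I. complex_of_real (a j) * (2 * s j / (s j - z)^2))" for z
  define D where "D = (\<Prod>j\<in>I. [:- s j, 1:])"
  define Dj where "Dj j = (\<Prod>l\<in>I-{j}. [:- s l, 1:])" for j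
  define N where "N = smult (\<i> * complex_of_real b) D - (\<Sum>j\<in>I. smult (complex_of_real (a j)) ([:s j, 1:] * Dj j))"
  have finI: "finite I" and Ine: "I \<noteq> {}" and cardI: "card I = m" using m1 by (auto simp: I_def)
  have finS: "finite S" using finI by (simp add: S_def)
  have apos': "j \<in> I \<Longrightarrow> a j > 0" for j using apos by (simp add: I_def)
  have sunit': "j \<in> I \<Longrightarrow> cmod (s j) = 1" for j using sunit by (simp add: I_def)
  have sinj': "i \<in> I \<Longrightarrow> j \<in> I \<Longrightarrow> s i = s j \<Longrightarrow> i = j" for i j using sinj unfolding I_def inj_on_def by blast
  have polyD: "poly D z = (\<Prod>j\<in>I. z - s j)" for z by (simp add: D_def poly_prod)
  have polyDj: "poly (Dj j) z = (\<Prod>l\<in>I-{j}. z - s l)" for j z by (simp add: Dj_def poly_prod)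
  have Dsplit: "poly D z = (z - s j) * poly (Dj j) z" if "j \<in> I" for j z
    unfolding polyD polyDj using finI that by (simp add: prod.remove)
  have D0: "poly D z = 0 \<longleftrightarrow> z \<in> S" for z
    unfolding polyD S_def using finI by (auto simp: prod_zero_iff)
  have Nval: "poly N z = pf z * poly D z" if z: "z \<notin> S" for z
  proof -
    have "poly N z = \<i> * complex_of_real b * poly D z - (\<Sum>j\<in>I. complex_of_real (a j) * ((s j + z) * poly (Dj j) z))"
      by (simp add: N_def poly_sum ring_distribs)
    also have "(\<Sum>j\<in>I. complex_of_real (a j) * ((s j + z) * poly (Dj j) z))
       = - (\<Sum>j\<in>I. complex_of_real (a j) * ((s j + z) / (s j - z)) * poly D z)"
      unfolding sum_negf[symmetric]
    proof (rule sum.cong[OF refl])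
      fix j assume j: "j \<in> I"
      have nz: "s j - z \<noteq> 0" using z j by (auto simp: S_def)
      show "complex_of_real (a j) * ((s j + z) * poly (Dj j) z) = - (complex_of_real (a j) * ((s j + z) / (s j - z)) * poly D z)"
        unfolding Dsplit[OF j] using nz by (simp add: field_simps)
    qed
    also have "\<i> * complex_of_real b * poly D z - - (\<Sum>j\<in>I. complex_of_real (a j) * ((s j + z) / (s j - z)) * poly D z) = pf z * poly D z"
      unfolding pf_def by (simp only: distrib_right sum_distrib_right diff_minus_eq_add)
    finally show ?thesis .
  qed
  have NS: "poly N (s j) \<noteq> 0" if j: "j \<in> I" for j
  proof -
    have D0j: "poly D (s j) = 0" using D0 j by (auto simp: S_def)
    have z: "poly (Dj i) (s j) = 0" if "i \<in> I - {j}" for i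
      unfolding polyDj using that j finI by (auto simp: prod_zero_iff)
    have "poly N (s j) = - (\<Sum>i\<in>I. complex_of_real (a i) * ((s i + s j) * poly (Dj i) (s j)))"
      by (simp add: N_def poly_sum D0j ring_distribs)
    also have "(\<Sum>i\<in>I. complex_of_real (a i) * ((s i + s j) * poly (Dj i) (s j)))
       = complex_of_real (a j) * ((s j + s j) * poly (Dj j) (s j))"
      using z finI j by (subst sum.remove[of _ j]) (auto intro!: sum.neutral)
    finally have e: "poly N (s j) = - (complex_of_real (a j) * ((s j + s j) * poly (Dj j) (s j)))" .
    have "poly (Dj j) (s j) \<noteq> 0"
      unfolding polyDj using finI j sinj' by (auto simp: prod_zero_iff)
    moreover have "s j \<noteq> 0" using sunit'[OF j] by auto
    moreover have "a j \<noteq> 0" using apos'[OF j] by simp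
    ultimately show ?thesis unfolding e by simp
  qed
  have degD: "degree D = m"
    using cardI by (simp add: D_def degree_prod_sum_eq)
  have "lead_coeff D = 1" unfolding D_def by (subst lead_coeff_prod) simp
  then have lcD: "coeff D m = 1" using degD by simp
  have degDj: "degree ([:s j, 1:] * Dj j) = m" and lcDj: "lead_coeff ([:s j, 1:] * Dj j) = 1" if j: "j \<in> I" for j
  proof -
    have dDj: "degree (Dj j) = m - 1" using cardI finI j by (simp add: Dj_def degree_prod_sum_eq)
    have lDj: "lead_coeff (Dj j) = 1" unfolding Dj_def by (subst lead_coeff_prod) simp
    have nz: "Dj j \<noteq> 0" unfolding Dj_def by (auto simp: prod_zero_iff finI)
    have e1: "degree ([:s j, 1:] * Dj j) = degree [:s j, 1:] + degree (Dj j)" using nz by (intro degree_mult_eq) auto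
    show "degree ([:s j, 1:] * Dj j) = m" using e1 dDj m1 by simp
    have "lead_coeff ([:s j, 1:] * Dj j) = lead_coeff [:s j, 1:] * lead_coeff (Dj j)" by (rule lead_coeff_mult)
    also have "\<dots> = 1" using lDj by simp
    finally show "lead_coeff ([:s j, 1:] * Dj j) = 1" .
  qed
  have coeffN: "coeff N m = \<i> * complex_of_real b - (\<Sum>j\<in>I. complex_of_real (a j))"
  proof -
    have "coeff ([:s j, 1:] * Dj j) m = 1" if "j \<in> I" for j using degDj[OF that] lcDj[OF that] by simp
    moreover have "coeff D m = 1" by (rule lcD)
    ultimately show ?thesis by (simp add: N_def coeff_sum)
  qed
  have cN0: "coeff N m \<noteq> 0"
  proof
    assume "coeff N m = 0"
    then have "Re (coeff N m) = 0" by simp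
    moreover have "Re (coeff N m) = - (\<Sum>j\<in>I. a j)" unfolding coeffN by (simp add: Re_sum)
    moreover have "(\<Sum>j\<in>I. a j) > 0" using finI Ine apos' by (intro sum_pos) auto
    ultimately show False by simp
  qed
  have degN: "degree N = m"
  proof (rule antisym)
    have d1: "degree (smult (\<i> * complex_of_real b) D) \<le> m"
      by (rule order.trans[OF degree_smult_le]) (simp add: degD)
    have d2: "degree (smult (complex_of_real (a j)) ([:s j, 1:] * Dj j)) \<le> m" if "j \<in> I" for j
      by (rule order.trans[OF degree_smult_le]) (rule eq_imp_le[OF degDj[OF that]])
    show "degree N \<le> m" unfolding N_def
      by (intro degree_diff_le d1 degree_sum_le finI d2)
    show "m \<le> degree N" using cN0 by (rule le_degree)
  qed
  have N0: "N \<noteq> 0" using cN0 by auto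
  have Repf: "Re (pf z) = (1 - (cmod z)^2) * (\<Sum>j\<in>I. a j / (cmod (s j - z))^2)" for z
  proof -
    have Rt: "Re (complex_of_real (a j) * ((s j + z) / (s j - z))) = a j / (cmod (s j - z))^2 * (1 - (cmod z)^2)"
      if "j \<in> I" for j
    proof -
      have RM: "Re (complex_of_real r * w) = r * Re w" for r w by simp
      show ?thesis unfolding RM re_frac[OF sunit'[OF that], of z] by simp
    qed
    have "Re (pf z) = Re (\<i> * complex_of_real b) + (\<Sum>j\<in>I. Re (complex_of_real (a j) * ((s j + z) / (s j - z))))"
      unfolding pf_def by (simp only: plus_complex.sel Re_sum)
    also have "\<dots> = (\<Sum>j\<in>I. a j / (cmod (s j - z))^2 * (1 - (cmod z)^2))" using Rt by simp
    also have "\<dots> = (1 - (cmod z)^2) * (\<Sum>j\<in>I. a j / (cmod (s j - z))^2)"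
      unfolding sum_distrib_left by (rule sum.cong[OF refl]) (rule mult.commute)
    finally show ?thesis .
  qed
  have sumpos: "(\<Sum>j\<in>I. a j / (cmod (s j - z))^2) > 0" if zS: "z \<notin> S" for z
  proof (intro sum_pos finI Ine)
    fix j assume j: "j \<in> I"
    have "s j - z \<noteq> 0" using zS j by (auto simp: S_def)
    then show "a j / (cmod (s j - z))^2 > 0" using apos'[OF j] by simp
  qed
  define T where "T = {t. poly N t = 0}"
  have finT: "finite T" unfolding T_def using N0 by (rule poly_roots_finite)
  have TS: "t \<notin> S" if "t \<in> T" for t using that NS by (auto simp: T_def S_def)
  have Tpf: "pf t = 0" if "t \<in> T" for t
    using that TS[OF that] Nval[of t] D0[of t] by (auto simp: T_def)
  have Tunit: "cmod t = 1" if "t \<in> T" for t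
  proof -
    have "Re (pf t) = 0" using Tpf[OF that] by simp
    then have "(1 - (cmod t)^2) = 0" using Repf[of t] sumpos[OF TS[OF that]] by simp
    then show ?thesis by (simp add: power2_eq_1_iff) (smt (verit) norm_ge_zero)
  qed
  have pfder: "(pf has_field_derivative pf' z) (at z)" if z: "z \<notin> S" for z
  proof -
    have dj: "((\<lambda>z. complex_of_real (a j) * ((s j + z) / (s j - z))) has_field_derivative
               complex_of_real (a j) * (2 * s j / (s j - z)^2)) (at z)" if j: "j \<in> I" for j
    proof -
      have nz: "s j - z \<noteq> 0" using z j by (auto simp: S_def)
      have "((\<lambda>z. (s j + z) / (s j - z)) has_field_derivative 2 * s j / (s j - z)^2) (at z)"
        using nz by (auto intro!: derivative_eq_intros simp: field_simps power2_eq_square)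
      then show ?thesis by (rule DERIV_cmult)
    qed
    have "((\<lambda>z. \<Sum>j\<in>I. complex_of_real (a j) * ((s j + z) / (s j - z))) has_field_derivative pf' z) (at z)"
      unfolding pf'_def by (rule DERIV_sum) (use dj in auto)
    then have "((\<lambda>z. \<i> * complex_of_real b + (\<Sum>j\<in>I. complex_of_real (a j) * ((s j + z) / (s j - z))))
                 has_field_derivative 0 + pf' z) (at z)"
      by (rule DERIV_add[OF DERIV_const])
    moreover have "pf = (\<lambda>z. \<i> * complex_of_real b + (\<Sum>j\<in>I. complex_of_real (a j) * ((s j + z) / (s j - z))))"
      by (rule ext) (simp add: pf_def)
    ultimately show ?thesis by simp
  qed
  have opS: "open (- S)" using finS by (simp add: finite_imp_closed open_Compl)
  have Nder: "poly (pderiv N) t = pf' t * poly D t" if t: "t \<in> T" for t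
  proof -
    have "((\<lambda>z. pf z * poly D z) has_field_derivative pf' t * poly D t + poly (pderiv D) t * pf t) (at t)"
      by (rule DERIV_mult[OF pfder[OF TS[OF t]] poly_DERIV])
    then have "((\<lambda>z. pf z * poly D z) has_field_derivative pf' t * poly D t) (at t)" using Tpf[OF t] by simp
    then have "((\<lambda>z. poly N z) has_field_derivative pf' t * poly D t) (at t)"
      by (rule has_field_derivative_transform_within_open[OF _ opS]) (use TS[OF t] Nval in auto)
    then show ?thesis using poly_DERIV[of N t] by (rule DERIV_unique[symmetric])
  qed
  define rr where "rr t = (\<Sum>j\<in>I. 2 * a j * (1 / (2 * Re (s j * cnj t) - 2)))" for t
  have rr: "t * pf' t = complex_of_real (rr t)" and rrneg: "rr t < 0" if t: "t \<in> T" for t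
  proof -
    have "t * pf' t = (\<Sum>j\<in>I. complex_of_real (2 * a j) * (s j * t / (s j - t)^2))"
      unfolding pf'_def sum_distrib_left by (rule sum.cong[OF refl]) (simp add: field_simps)
    also have "\<dots> = (\<Sum>j\<in>I. complex_of_real (2 * a j * (1 / (2 * Re (s j * cnj t) - 2))))"
    proof (rule sum.cong[OF refl])
      fix j assume j: "j \<in> I"
      have "s j \<noteq> t" using TS[OF t] j by (auto simp: S_def)
      then show "complex_of_real (2 * a j) * (s j * t / (s j - t)^2) = complex_of_real (2 * a j * (1 / (2 * Re (s j * cnj t) - 2)))"
        using neg_real_frac[of "s j" t] sunit'[OF j] Tunit[OF t] by simp
    qed
    also have "\<dots> = complex_of_real (rr t)" by (simp add: rr_def)
    finally show "t * pf' t = complex_of_real (rr t)" .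
    have "(\<Sum>j\<in>I. - (2 * a j * (1 / (2 * Re (s j * cnj t) - 2)))) > 0"
    proof (intro sum_pos finI Ine)
      fix j assume j: "j \<in> I"
      have "s j \<noteq> t" using TS[OF t] j by (auto simp: S_def)
      then have X: "2 * Re (s j * cnj t) - 2 < 0" using neg_real_frac[of "s j" t] sunit'[OF j] Tunit[OF t] by simp
      have "1 / (2 * Re (s j * cnj t) - 2) < 0" using X by simp
      then have "2 * a j * (1 / (2 * Re (s j * cnj t) - 2)) < 0" using apos'[OF j] by (intro mult_pos_neg) auto
      then show "- (2 * a j * (1 / (2 * Re (s j * cnj t) - 2))) > 0" by linarith
    qed
    then show "rr t < 0" by (simp add: rr_def sum_negf)
  qed
  have cardT: "card T = m"
    unfolding T_def degN[symmetric]
  proof (rule card_roots_simple[OF N0])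
    fix t assume "poly N t = 0"
    then have t: "t \<in> T" by (simp add: T_def)
    have "pf' t \<noteq> 0" using rr[OF t] rrneg[OF t] by auto
    moreover have "poly D t \<noteq> 0" using D0 TS[OF t] by simp
    ultimately show "poly (pderiv N) t \<noteq> 0" using Nder[OF t] by simp
  qed
  have QE: "\<exists>q. N = [:-t, 1:] * q" if "t \<in> T" for t
    using that by (auto simp: T_def poly_eq_0_iff_dvd dvd_def)
  define Q where "Q t = (SOME q. N = [:-t, 1:] * q)" for t
  have QN: "N = [:-t, 1:] * Q t" if "t \<in> T" for t
    unfolding Q_def using someI_ex[OF QE[OF that]] .
  have polyQN: "poly N z = (z - t) * poly (Q t) z" if "t \<in> T" for t z
    by (subst QN[OF that]) (simp add: algebra_simps)
  have Qt: "poly (Q t) t = pf' t * poly D t" if t: "t \<in> T" for t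
  proof -
    have "pderiv N = [:-t, 1:] * pderiv (Q t) + Q t * pderiv [:-t, 1:]"
      by (subst QN[OF t]) (rule pderiv_mult)
    then have "poly (pderiv N) t = poly (Q t) t" by (simp add: pderiv_pCons)
    then show ?thesis using Nder[OF t] by simp
  qed
  have Qo: "poly (Q u) t = 0" if "u \<in> T" "t \<in> T" "u \<noteq> t" for u t
    using polyQN[OF that(1), of t] that(2,3) by (simp add: T_def)
  have Qz: "poly (Q t) z = poly N z / (z - t)" if "t \<in> T" "z \<noteq> t" for t z
    using polyQN[OF that(1), of z] that(2) by simp
  define c where "c t = - 1 / (2 * rr t)" for t
  have cpos: "c t > 0" if "t \<in> T" for t using rrneg[OF that] by (simp add: c_def)
  have "infinite (sphere (0::complex) 1 - (S \<union> T))"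
    using Diff_infinite_finite[OF _ infinite_circle, of "S \<union> T"] finS finT by auto
  then obtain z0 where "z0 \<in> sphere (0::complex) 1 - (S \<union> T)"
    using infinite_imp_nonempty by blast
  then have z0: "cmod z0 = 1" "z0 \<notin> S" "z0 \<notin> T" by auto
  define w where "w t z = (t + z) / (t - z)" for t z :: complex
  define C where "C = 1 / pf z0 - (\<Sum>t\<in>T. complex_of_real (c t) * w t z0)"
  define NG where "NG = smult C N - (\<Sum>t\<in>T. smult (complex_of_real (c t)) ([:t, 1:] * Q t))"
  have NGsum: "poly NG z = C * poly N z - (\<Sum>t\<in>T. complex_of_real (c t) * ((t + z) * poly (Q t) z))" for z
    by (simp add: NG_def poly_sum ring_distribs)
  have NGval: "poly NG z = poly N z * (C + (\<Sum>t\<in>T. complex_of_real (c t) * w t z))" if zT: "z \<notin> T" for z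
  proof -
    have "(\<Sum>t\<in>T. complex_of_real (c t) * ((t + z) * poly (Q t) z)) = - (poly N z * (\<Sum>t\<in>T. complex_of_real (c t) * w t z))"
      unfolding sum_distrib_left sum_negf[symmetric]
    proof (rule sum.cong[OF refl])
      fix t assume t: "t \<in> T"
      have nz1: "z - t \<noteq> 0" and nz2: "t - z \<noteq> 0" using zT t by auto
      show "complex_of_real (c t) * ((t + z) * poly (Q t) z) = - (poly N z * (complex_of_real (c t) * w t z))"
      proof -
        have zt: "z \<noteq> t" using nz1 by simp
        show ?thesis unfolding Qz[OF t zt] w_def using nz1 nz2 by (simp add: field_simps)
      qed
    qed
    then show ?thesis unfolding NGsum by (simp add: algebra_simps)
  qed
  have pfz0: "pf z0 \<noteq> 0"
  proof
    assume "pf z0 = 0"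
    then have "poly N z0 = 0" using Nval[OF z0(2)] by simp
    then show False using z0(3) by (simp add: T_def)
  qed
  have RM: "Re (complex_of_real r * x) = r * Re x" for r x by simp
  have ReC: "Re C = 0"
  proof -
    have "Re (pf z0) = 0" using Repf[of z0] z0(1) by simp
    then have r1: "Re (1 / pf z0) = 0" by (simp add: Re_divide)
    have r2: "Re (complex_of_real (c t) * w t z0) = 0" if "t \<in> T" for t
      unfolding RM w_def re_frac[OF Tunit[OF that]] using z0(1) by simp
    have r3: "(\<Sum>t\<in>T. Re (complex_of_real (c t) * w t z0)) = 0"
      by (rule sum.neutral) (use r2 in blast)
    show ?thesis unfolding C_def minus_complex.sel Re_sum by (simp only: r1 r3 diff_self)
  qed
  have degQ: "degree (Q t) = m - 1" if "t \<in> T" for t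
  proof -
    have "Q t \<noteq> 0" using QN[OF that] N0 by auto
    then have "degree N = degree [:-t, 1:] + degree (Q t)"
      by (subst QN[OF that]) (intro degree_mult_eq, auto)
    then show ?thesis using degN by simp
  qed
  have DNG: "D = NG"
  proof (rule poly_eqI_degree[of "insert z0 T"])
    fix x assume "x \<in> insert z0 T"
    then show "poly D x = poly NG x"
    proof
      assume x: "x = z0"
      have "poly NG z0 = poly N z0 * (1 / pf z0)" using NGval[OF z0(3)] by (simp add: C_def)
      also have "\<dots> = poly D z0" using Nval[OF z0(2)] pfz0 by simp
      finally show ?thesis using x by simp
    next
      assume t: "x \<in> T"
      have "(\<Sum>u\<in>T. complex_of_real (c u) * ((u + x) * poly (Q u) x)) = complex_of_real (c x) * ((x + x) * poly (Q x) x)"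
        using finT t Qo[of _ x] by (subst sum.remove[of _ x]) (auto intro!: sum.neutral)
      moreover have "poly N x = 0" using t by (simp add: T_def)
      ultimately have "poly NG x = - (complex_of_real (c x) * (2 * (x * pf' x)) * poly D x)"
        unfolding NGsum using Qt[OF t] by (simp add: algebra_simps)
      moreover have cr: "c x * (2 * rr x) = -1" using rrneg[OF t] by (simp add: c_def)
      have "complex_of_real (c x) * (2 * (x * pf' x)) = -1"
        unfolding rr[OF t] using arg_cong[OF cr, of complex_of_real] by simp
      ultimately show ?thesis by simp
    qed
  next
    show "degree D < card (insert z0 T)" using degD cardT finT z0(3) by simp
    have d1: "degree (smult C N) \<le> m"
      by (rule order.trans[OF degree_smult_le]) (simp add: degN)
    have d2: "degree (smult (complex_of_real (c t)) ([:t, 1:] * Q t)) \<le> m" if "t \<in> T" for t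
    proof (rule order.trans[OF degree_smult_le])
      have "degree ([:t, 1:] * Q t) \<le> degree [:t, 1:] + degree (Q t)" by (rule degree_mult_le)
      then show "degree ([:t, 1:] * Q t) \<le> m" using degQ[OF that] m1 by simp
    qed
    have "degree NG \<le> m" unfolding NG_def by (intro degree_diff_le d1 degree_sum_le finT d2)
    then show "degree NG < card (insert z0 T)" using cardT finT z0(3) by simp
  qed
  obtain h where h: "bij_betw h {1..m} T" using ex_bij_betw_nat_finite_1[OF finT] cardT by auto
  have hT: "h j \<in> T" if "j \<in> {1..m}" for j using h that by (auto simp: bij_betw_def)
  have repr: "\<forall>z\<in>ball 0 1. 1 / p z = \<i> * complex_of_real (Im C) +
      (\<Sum>j=1..m. complex_of_real ((c \<circ> h) j) * ((h j + z) / (h j - z)))"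
  proof
    fix z :: complex assume z: "z \<in> ball 0 1"
    then have cz: "cmod z < 1" by simp
    have zS: "z \<notin> S" using cz sunit' by (auto simp: S_def)
    have zT: "z \<notin> T" using cz Tunit by fastforce
    have pz: "p z = pf z" using prep z by (simp add: pf_def I_def)
    have Dz: "poly D z \<noteq> 0" using D0 zS by simp
    have "(cmod z)^2 < 1" using cz by (simp add: power_less_one_iff abs_square_less_1)
    then have "Re (pf z) > 0" using Repf[of z] sumpos[OF zS] by simp
    then have pfz: "pf z \<noteq> 0" by auto
    have Nz: "poly N z \<noteq> 0" using Nval[OF zS] Dz pfz by simp
    have "1 / p z = poly D z / poly N z" using pz Nval[OF zS] Dz pfz by simp
    also have "\<dots> = poly NG z / poly N z" by (simp add: DNG)
    also have "\<dots> = C + (\<Sum>t\<in>T. complex_of_real (c t) * w t z)" using NGval[OF zT] Nz by simp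
    also have "C = \<i> * complex_of_real (Im C)" using ReC by (simp add: complex_eq_iff)
    also have "(\<Sum>t\<in>T. complex_of_real (c t) * w t z) = (\<Sum>j=1..m. complex_of_real ((c \<circ> h) j) * ((h j + z) / (h j - z)))"
      using sum.reindex_bij_betw[OF h, of "\<lambda>t. complex_of_real (c t) * w t z"] by (simp add: w_def)
    finally show "1 / p z = \<i> * complex_of_real (Im C) + (\<Sum>j=1..m. complex_of_real ((c \<circ> h) j) * ((h j + z) / (h j - z)))" .
  qed
  have "\<forall>j\<in>{1..m}. (c \<circ> h) j > 0" using hT cpos by auto
  moreover have "\<forall>j\<in>{1..m}. cmod (h j) = 1" using hT Tunit by auto
  moreover have "inj_on h {1..m}" using h by (simp add: bij_betw_def)
  ultimately show ?thesis unfolding Pm_def mem_Collect_eq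
    by (intro exI[of _ "Im C"] exI[of _ "c \<circ> h"] exI[of _ h] conjI repr)
qed

theorem lemma6p13:
  fixes m :: nat
  assumes "m \<ge> 1"
  shows "(\<forall>p\<in>Pm m. (\<lambda>z. 1 / p z) \<in> Pm m)
       \<and> (\<forall>q\<in>Pm m. \<exists>p\<in>Pm m. \<forall>z\<in>ball 0 1. q z = 1 / p z)
       \<and> (\<forall>p\<in>Pm m. \<forall>z\<in>ball 0 1. 1 / (1 / p z) = p z)"
proof (intro conjI ballI)
  fix p assume "p \<in> Pm m"
  then show "(\<lambda>z. 1 / p z) \<in> Pm m" using inv_in_Pm[OF assms] by blast
next
  fix q assume q: "q \<in> Pm m"
  show "\<exists>p\<in>Pm m. \<forall>z\<in>ball 0 1. q z = 1 / p z"
    using inv_in_Pm[OF assms q] by (intro bexI[of _ "\<lambda>z. 1 / q z"]) auto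
next
  fix p :: "complex \<Rightarrow> complex" and z :: complex
  show "1 / (1 / p z) = p z" by (simp only: inverse_eq_divide[symmetric] inverse_inverse_eq)
qed

end
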